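(* Let $r\ge2$, $m=2$, $a_{ij}\in\mathbb{C}$ ($i=1,2$, $1\le j\le r$), $f_i=\sum_{j=1}^r a_{ij}z_j$, and let $S_1$ be the family $(z_1^2,\dots,z_r^2,f_1^2,f_2^2)$. Then $S_1$ is linearly dependent if and only if at least one of the following holds: (a) there are two members of $S_1$ (with distinct indices) that are linearly dependent, i.e. one is a scalar multiple of the other; (b) there exist $1\le M\ne N\le r$ such that $a_{1i}=a_{2i}=0$ for all $i\notin\{M,N\}$, i.e. $f_1=a_{1M}z_M+a_{1N}z_N$ and $f_2=a_{2M}z_M+a_{2N}z_N$.
   Context: A family of polynomials is linearly independent over $\mathbb{C}$ if no nontrivial $\mathbb{C}$-linear combination of its members (counted with their indices) vanishes; otherwise it is linearly dependent. *)

theory Defs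
  imports Complex_Main
begin

text \<open>Polynomials in the variables z_1,...,z_r over C are represented by their
polynomial functions (nat => complex) => complex; since C is infinite, a polynomial
vanishes iff its function vanishes, so linear (in)dependence is the same notion.\<close>

definition lin_dep_family :: "'i set \<Rightarrow> ('i \<Rightarrow> (nat \<Rightarrow> complex) \<Rightarrow> complex) \<Rightarrow> bool" where
  "lin_dep_family I P \<longleftrightarrow>
     (\<exists>c :: 'i \<Rightarrow> complex. (\<exists>k\<in>I. c k \<noteq> 0) \<and> (\<forall>z. (\<Sum>k\<in>I. c k * P k z) = 0))"

definition linform :: "nat \<Rightarrow> (nat \<Rightarrow> complex) \<Rightarrow> (nat \<Rightarrow> complex) \<Rightarrow> complex" where
  "linform r b z = (\<Sum>j=1..r. b j * z j)"

definition S1 :: "nat \<Rightarrow> (nat \<Rightarrow> nat \<Rightarrow> complex) \<Rightarrow> nat \<Rightarrow> (nat \<Rightarrow> complex) \<Rightarrow> complex" where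
  "S1 r a k z = (if k \<le> r then (z k)^2
                 else if k = r + 1 then (linform r (a 1) z)^2
                 else (linform r (a 2) z)^2)"

end

theory Submission
  imports Defs
begin

lemma sum_S1:
  "(\<Sum>k\<in>{1..r+2}. c k * S1 r a k z) =
     (\<Sum>k\<in>{1..r}. c k * (z k)^2) + c (r+1) * (linform r (a 1) z)^2 + c (r+2) * (linform r (a 2) z)^2"
proof -
  have e: "{1..r+2} = insert (r+2) (insert (r+1) {1..r})" by auto
  have "(\<Sum>k\<in>{1..r+2}. c k * S1 r a k z) =
        c (r+2) * S1 r a (r+2) z + (c (r+1) * S1 r a (r+1) z + (\<Sum>k\<in>{1..r}. c k * S1 r a k z))"
    unfolding e by (simp)
  also have "(\<Sum>k\<in>{1..r}. c k * S1 r a k z) = (\<Sum>k\<in>{1..r}. c k * (z k)^2)"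
    by (rule sum.cong) (auto simp: S1_def)
  finally show ?thesis by (simp add: S1_def)
qed

lemma pair_dep:
  assumes "i \<noteq> j" "c \<noteq> 0 \<or> d \<noteq> 0" "\<And>z. c * P i z + d * P j z = 0"
  shows "lin_dep_family {i, j} P"
  unfolding lin_dep_family_def
  apply (rule exI[of _ "\<lambda>k. if k = i then c else d"])
  using assms by auto

lemma sub_dep:
  assumes "J \<subseteq> I" "finite I" "lin_dep_family J P"
  shows "lin_dep_family I P"
proof -
  from assms(3) obtain c where c: "\<exists>k\<in>J. c k \<noteq> 0" "\<forall>z. (\<Sum>k\<in>J. c k * P k z) = 0"
    unfolding lin_dep_family_def by blast
  define c' where "c' k = (if k \<in> J then c k else 0)" for k
  have "(\<Sum>k\<in>I. c' k * P k z) = (\<Sum>k\<in>J. c k * P k z)" for z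
  proof -
    have "(\<Sum>k\<in>I. c' k * P k z) = (\<Sum>k\<in>J. c' k * P k z)"
      by (rule sum.mono_neutral_right) (use assms in \<open>auto simp: c'_def\<close>)
    also have "\<dots> = (\<Sum>k\<in>J. c k * P k z)" by (rule sum.cong) (auto simp: c'_def)
    finally show ?thesis .
  qed
  then show ?thesis unfolding lin_dep_family_def
    using c assms(1) by (intro exI[of _ c']) (auto simp: c'_def)
qed

lemma linform_single:
  assumes "i \<in> {1..r}" "\<forall>j\<in>{1..r}. j \<noteq> i \<longrightarrow> b j = 0"
  shows "linform r b z = b i * z i"
proof -
  have "linform r b z = b i * z i + (\<Sum>j\<in>{1..r} - {i}. b j * z j)"
    unfolding linform_def using assms(1) by (simp add: sum.remove)
  also have "(\<Sum>j\<in>{1..r} - {i}. b j * z j) = 0" using assms(2) by (intro sum.neutral) auto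
  finally show ?thesis by simp
qed

lemma linform_two:
  assumes "M \<in> {1..r}" "N \<in> {1..r}" "M \<noteq> N" "\<forall>j\<in>{1..r}. j \<notin> {M,N} \<longrightarrow> b j = 0"
  shows "linform r b z = b M * z M + b N * z N"
proof -
  have "linform r b z = (\<Sum>j\<in>{M,N}. b j * z j)"
    unfolding linform_def
    by (rule sum.mono_neutral_right) (use assms in auto)
  then show ?thesis using assms(3) by simp
qed

lemma sum_two:
  fixes r :: nat
  assumes "M \<in> {1..r}" "N \<in> {1..r}" "M \<noteq> N" "\<forall>j\<in>{1..r}. j \<notin> {M,N} \<longrightarrow> g j = 0"
  shows "(\<Sum>j\<in>{1..r}. g j) = g M + g N"
proof -
  have "(\<Sum>j\<in>{1..r}. g j) = (\<Sum>j\<in>{M,N}. g j)"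
    using assms by (intro sum.mono_neutral_right) auto
  then show ?thesis using assms(3) by simp
qed

lemma one_support:
  fixes r :: nat
  assumes "\<forall>i\<in>{1..r}. \<forall>j\<in>{1..r}. i \<noteq> j \<longrightarrow> A i * A j = (0::complex)" "r \<ge> 1"
  shows "\<exists>i\<in>{1..r}. \<forall>j\<in>{1..r}. j \<noteq> i \<longrightarrow> A j = 0"
proof (cases "\<exists>i\<in>{1..r}. A i \<noteq> 0")
  case True
  then obtain i where "i \<in> {1..r}" "A i \<noteq> 0" by blast
  have "\<forall>j\<in>{1..r}. j \<noteq> i \<longrightarrow> A j = 0"
  proof (intro ballI impI)
    fix j assume j: "j \<in> {1..r}" "j \<noteq> i"
    have "A i * A j = 0" using assms(1)[rule_format, OF \<open>i \<in> {1..r}\<close> j(1)] j(2) by auto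
    then show "A j = 0" using \<open>A i \<noteq> 0\<close> by simp
  qed
  then show ?thesis using \<open>i \<in> {1..r}\<close> by blast
next
  case False
  then have "\<forall>j\<in>{1..r}. j \<noteq> 1 \<longrightarrow> A j = 0" by blast
  moreover have "(1::nat) \<in> {1..r}" using assms(2) by simp
  ultimately show ?thesis by blast
qed

lemma main_alg:
  fixes A B :: "nat \<Rightarrow> complex"
  assumes orth: "\<forall>i\<in>{1..r}. \<forall>j\<in>{1..r}. i \<noteq> j \<longrightarrow> d1 * A i * A j + d2 * B i * B j = 0"
    and nz: "d1 \<noteq> 0 \<or> d2 \<noteq> 0" and r: "r \<ge> 2"
  shows "(\<exists>i\<in>{1..r}. \<forall>j\<in>{1..r}. j \<noteq> i \<longrightarrow> A j = 0) \<or>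
         (\<exists>i\<in>{1..r}. \<forall>j\<in>{1..r}. j \<noteq> i \<longrightarrow> B j = 0) \<or>
         (\<exists>l. \<forall>j\<in>{1..r}. B j = l * A j) \<or>
         (\<exists>M\<in>{1..r}. \<exists>N\<in>{1..r}. M \<noteq> N \<and> (\<forall>k\<in>{1..r}. k \<notin> {M, N} \<longrightarrow> A k = 0 \<and> B k = 0))"
proof (cases "\<forall>i\<in>{1..r}. \<forall>j\<in>{1..r}. A i * B j = A j * B i")
  case True
  show ?thesis
  proof (cases "\<exists>i\<in>{1..r}. A i \<noteq> 0")
    case False
    then show ?thesis using r by (intro disjI1 bexI[of _ 1]) auto
  next
    case T2: True
    then obtain i where i: "i \<in> {1..r}" "A i \<noteq> 0" by blast
    have "\<forall>j\<in>{1..r}. B j = (B i / A i) * A j"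
    proof
      fix j assume "j \<in> {1..r}"
      then have "A i * B j = A j * B i" using True i by blast
      then show "B j = (B i / A i) * A j" using i(2) by (simp add: field_simps)
    qed
    then show ?thesis by blast
  qed
next
  case False
  then obtain i j where ij: "i \<in> {1..r}" "j \<in> {1..r}" "A i * B j \<noteq> A j * B i" by blast
  then have ineq: "i \<noteq> j" by auto
  show ?thesis
  proof (cases "d1 = 0")
    case True
    then have "d2 \<noteq> 0" using nz by simp
    then have "\<forall>i\<in>{1..r}. \<forall>j\<in>{1..r}. i \<noteq> j \<longrightarrow> B i * B j = 0"
      using orth True by auto
    then show ?thesis using one_support[of r B] r by auto
  next
    case d1: False
    show ?thesis
    proof (cases "d2 = 0")
      case True
      then have "\<forall>i\<in>{1..r}. \<forall>j\<in>{1..r}. i \<noteq> j \<longrightarrow> A i * A j = 0"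
        using orth d1 by auto
      then show ?thesis using one_support[of r A] r by auto
    next
      case d2: False
      have "\<forall>k\<in>{1..r}. k \<notin> {i, j} \<longrightarrow> A k = 0 \<and> B k = 0"
      proof (intro ballI impI)
        fix k assume k: "k \<in> {1..r}" "k \<notin> {i, j}"
        have h1: "d1 * A k * A i + d2 * B k * B i = 0" using orth k ij by auto
        have h2: "d1 * A k * A j + d2 * B k * B j = 0" using orth k ij by auto
        have "d1 * A k * (A i * B j - A j * B i) =
              B j * (d1 * A k * A i + d2 * B k * B i) - B i * (d1 * A k * A j + d2 * B k * B j)"
          by (simp add: algebra_simps)
        then have "d1 * A k * (A i * B j - A j * B i) = 0" using h1 h2 by simp
        then have a: "A k = 0" using d1 ij(3) by simp
        have "d2 * B k * (A i * B j - A j * B i) =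
              A i * (d1 * A k * A j + d2 * B k * B j) - A j * (d1 * A k * A i + d2 * B k * B i)"
          by (simp add: algebra_simps)
        then have "d2 * B k * (A i * B j - A j * B i) = 0" using h1 h2 by simp
        then have "B k = 0" using d2 ij(3) by simp
        with a show "A k = 0 \<and> B k = 0" by simp
      qed
      then show ?thesis using ij ineq by blast
    qed
  qed
qed

definition ev :: "nat \<Rightarrow> nat \<Rightarrow> complex" where "ev i = (\<lambda>k. if k = i then 1 else 0)"

lemma linform_ev: "i \<in> {1..r} \<Longrightarrow> linform r b (ev i) = b i"
proof -
  assume a: "i \<in> {1..r}"
  have "(\<Sum>k\<in>{1..r}. b k * ev i k) = (\<Sum>k\<in>{1..r}. if k = i then b k else 0)"
    by (rule sum.cong) (auto simp: ev_def)
  then show ?thesis unfolding linform_def using a by simp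
qed

lemma linform_ev2: "i \<in> {1..r} \<Longrightarrow> j \<in> {1..r} \<Longrightarrow> i \<noteq> j \<Longrightarrow>
   linform r b (\<lambda>k. ev i k + ev j k) = b i + b j"
proof -
  assume a: "i \<in> {1..r}" "j \<in> {1..r}" "i \<noteq> j"
  have "(\<Sum>k\<in>{1..r}. b k * (ev i k + ev j k)) = (\<Sum>k\<in>{1..r}. (if k = i then b k else 0) + (if k = j then b k else 0))"
    by (rule sum.cong) (use a(3) in \<open>auto simp: ev_def\<close>)
  then show ?thesis unfolding linform_def using a by (simp add: sum.distrib)
qed

lemma sq_ev: "i \<in> {1..r} \<Longrightarrow> (\<Sum>k\<in>{1..r}. c k * (ev i k)^2) = c i"
proof -
  assume a: "i \<in> {1..r}"
  have "(\<Sum>k\<in>{1..r}. c k * (ev i k)^2) = (\<Sum>k\<in>{1..r}. if k = i then c k else 0)"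
    by (rule sum.cong) (auto simp: ev_def)
  then show ?thesis using a by simp
qed

lemma sq_ev2: "i \<in> {1..r} \<Longrightarrow> j \<in> {1..r} \<Longrightarrow> i \<noteq> j \<Longrightarrow>
   (\<Sum>k\<in>{1..r}. c k * (ev i k + ev j k)^2) = c i + c j"
proof -
  assume a: "i \<in> {1..r}" "j \<in> {1..r}" "i \<noteq> j"
  have "(\<Sum>k\<in>{1..r}. c k * (ev i k + ev j k)^2) = (\<Sum>k\<in>{1..r}. c k * (ev i k)^2 + c k * (ev j k)^2)"
    by (rule sum.cong) (use a(3) in \<open>auto simp: ev_def power2_eq_square\<close>)
  then show ?thesis using sq_ev[OF a(1), of c] sq_ev[OF a(2), of c] by (simp add: sum.distrib)
qed

theorem corollary2p2:
  fixes r :: nat and a :: "nat \<Rightarrow> nat \<Rightarrow> complex"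
  assumes "r \<ge> 2"
  shows "lin_dep_family {1..r+2} (S1 r a) \<longleftrightarrow>
           ((\<exists>i\<in>{1..r+2}. \<exists>j\<in>{1..r+2}. i \<noteq> j \<and> lin_dep_family {i, j} (S1 r a)) \<or>
            (\<exists>M\<in>{1..r}. \<exists>N\<in>{1..r}. M \<noteq> N \<and>
               (\<forall>i\<in>{1..r}. i \<notin> {M, N} \<longrightarrow> a 1 i = 0 \<and> a 2 i = 0)))"
proof
  let ?A = "a 1" and ?B = "a 2"
  assume dep: "lin_dep_family {1..r+2} (S1 r a)"
  then obtain c where nt: "\<exists>k\<in>{1..r+2}. c k \<noteq> 0"
    and id: "\<forall>z. (\<Sum>k\<in>{1..r+2}. c k * S1 r a k z) = 0"
    unfolding lin_dep_family_def by blast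
  define d1 where "d1 = c (r+1)"
  define d2 where "d2 = c (r+2)"
  have E: "(\<Sum>k\<in>{1..r}. c k * (z k)^2) + d1 * (linform r ?A z)^2 + d2 * (linform r ?B z)^2 = 0" for z
    using id sum_S1[of c r a z] unfolding d1_def d2_def by simp
  have ei: "c i + d1 * (?A i)^2 + d2 * (?B i)^2 = 0" if "i \<in> {1..r}" for i
    using E[of "ev i"] sq_ev[OF that] linform_ev[OF that] by simp
  have orth: "\<forall>i\<in>{1..r}. \<forall>j\<in>{1..r}. i \<noteq> j \<longrightarrow> d1 * ?A i * ?A j + d2 * ?B i * ?B j = 0"
  proof (intro ballI impI)
    fix i j assume ij: "i \<in> {1..r}" "j \<in> {1..r}" "i \<noteq> j"
    have h: "c i + c j + d1 * (?A i + ?A j)^2 + d2 * (?B i + ?B j)^2 = 0"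
      using E[of "\<lambda>k. ev i k + ev j k"] sq_ev2[OF ij] linform_ev2[OF ij] by simp
    have "c i + c j + d1 * (?A i + ?A j)^2 + d2 * (?B i + ?B j)^2 =
          (c i + d1 * (?A i)^2 + d2 * (?B i)^2) + (c j + d1 * (?A j)^2 + d2 * (?B j)^2)
          + 2 * (d1 * ?A i * ?A j + d2 * ?B i * ?B j)"
      by (simp add: algebra_simps power2_eq_square)
    then have "(c i + d1 * (?A i)^2 + d2 * (?B i)^2) + (c j + d1 * (?A j)^2 + d2 * (?B j)^2)
          + 2 * (d1 * ?A i * ?A j + d2 * ?B i * ?B j) = 0" using h by metis
    then have "2 * (d1 * ?A i * ?A j + d2 * ?B i * ?B j) = 0"
      using ei[OF ij(1)] ei[OF ij(2)] by simp
    then show "d1 * ?A i * ?A j + d2 * ?B i * ?B j = 0"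
      by (simp only: mult_eq_0_iff[of 2] distrib_left[symmetric]) simp
  qed
  have nz: "d1 \<noteq> 0 \<or> d2 \<noteq> 0"
  proof (rule ccontr)
    assume "\<not> (d1 \<noteq> 0 \<or> d2 \<noteq> 0)"
    then have z: "d1 = 0" "d2 = 0" by auto
    have "c k = 0" if "k \<in> {1..r+2}" for k
    proof -
      have "k \<in> {1..r} \<or> k = r+1 \<or> k = r+2" using that by auto
      then show ?thesis using ei z unfolding d1_def d2_def by auto
    qed
    then show False using nt by blast
  qed
  have r1: "r + 1 \<in> {1..r+2}" "r + 2 \<in> {1..r+2}" by auto
  have sq: "S1 r a i z = (z i)^2" if "i \<in> {1..r}" for i z using that by (simp add: S1_def)
  have s1: "S1 r a (r+1) z = (linform r ?A z)^2" for z by (simp add: S1_def)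
  have s2: "S1 r a (r+2) z = (linform r ?B z)^2" for z by (simp add: S1_def)
  from main_alg[OF orth nz assms]
  show "((\<exists>i\<in>{1..r+2}. \<exists>j\<in>{1..r+2}. i \<noteq> j \<and> lin_dep_family {i, j} (S1 r a)) \<or>
            (\<exists>M\<in>{1..r}. \<exists>N\<in>{1..r}. M \<noteq> N \<and>
               (\<forall>i\<in>{1..r}. i \<notin> {M, N} \<longrightarrow> a 1 i = 0 \<and> a 2 i = 0)))"
  proof (elim disjE)
    assume "\<exists>i\<in>{1..r}. \<forall>j\<in>{1..r}. j \<noteq> i \<longrightarrow> ?A j = 0"
    then obtain i where i: "i \<in> {1..r}" "\<forall>j\<in>{1..r}. j \<noteq> i \<longrightarrow> ?A j = 0" by blast
    have "lin_dep_family {i, r+1} (S1 r a)"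
    proof (rule pair_dep[of _ _ "-((a 1 i)^2)" 1])
      fix z :: "nat \<Rightarrow> complex"
      have "S1 r a (r+1) z = (a 1 i * z i)^2" by (simp only: s1 linform_single[OF i])
      then show "-((a 1 i)^2) * S1 r a i z + 1 * S1 r a (r+1) z = 0"
        using sq[OF i(1)] by (simp add: power_mult_distrib)
    qed (use i in auto)
    moreover have "i \<in> {1..r+2}" "i \<noteq> r+1" using i by auto
    ultimately show ?thesis using r1 by blast
  next
    assume "\<exists>i\<in>{1..r}. \<forall>j\<in>{1..r}. j \<noteq> i \<longrightarrow> ?B j = 0"
    then obtain i where i: "i \<in> {1..r}" "\<forall>j\<in>{1..r}. j \<noteq> i \<longrightarrow> ?B j = 0" by blast
    have "lin_dep_family {i, r+2} (S1 r a)"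
    proof (rule pair_dep[of _ _ "-((a 2 i)^2)" 1])
      fix z :: "nat \<Rightarrow> complex"
      have "S1 r a (r+2) z = (a 2 i * z i)^2" by (simp only: s2 linform_single[OF i])
      then show "-((a 2 i)^2) * S1 r a i z + 1 * S1 r a (r+2) z = 0"
        using sq[OF i(1)] by (simp add: power_mult_distrib)
    qed (use i in auto)
    moreover have "i \<in> {1..r+2}" "i \<noteq> r+2" using i by auto
    ultimately show ?thesis using r1 by blast
  next
    assume "\<exists>l. \<forall>j\<in>{1..r}. ?B j = l * ?A j"
    then obtain l where l: "\<forall>j\<in>{1..r}. ?B j = l * ?A j" by blast
    have lf: "linform r ?B z = l * linform r ?A z" for z
      unfolding linform_def sum_distrib_left using l by (intro sum.cong) auto
    have "lin_dep_family {r+1, r+2} (S1 r a)"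
    proof (rule pair_dep[of _ _ "l^2" "-1"])
      fix z :: "nat \<Rightarrow> complex"
      have e2: "S1 r a (r+2) z = (l * linform r ?A z)^2" by (simp only: s2 lf)
      have "l^2 * (linform r ?A z)^2 + -1 * (l * linform r ?A z)^2 = 0"
        by (simp add: power_mult_distrib)
      then show "l^2 * S1 r a (r+1) z + -1 * S1 r a (r+2) z = 0"
        unfolding s1 e2 .
    qed auto
    then have "\<exists>j\<in>{1..r+2}. r+1 \<noteq> j \<and> lin_dep_family {r+1, j} (S1 r a)"
      using r1(2) by (intro bexI[of _ "r+2"]) auto
    then have "\<exists>i\<in>{1..r+2}. \<exists>j\<in>{1..r+2}. i \<noteq> j \<and> lin_dep_family {i, j} (S1 r a)"
      using r1(1) by (rule bexI[of _ "r+1"])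
    then show ?thesis by (rule disjI1)
  next
    assume "\<exists>M\<in>{1..r}. \<exists>N\<in>{1..r}. M \<noteq> N \<and> (\<forall>k\<in>{1..r}. k \<notin> {M, N} \<longrightarrow> ?A k = 0 \<and> ?B k = 0)"
    then show ?thesis by blast
  qed
next
  let ?A = "a 1" and ?B = "a 2"
  assume "((\<exists>i\<in>{1..r+2}. \<exists>j\<in>{1..r+2}. i \<noteq> j \<and> lin_dep_family {i, j} (S1 r a)) \<or>
            (\<exists>M\<in>{1..r}. \<exists>N\<in>{1..r}. M \<noteq> N \<and>
               (\<forall>i\<in>{1..r}. i \<notin> {M, N} \<longrightarrow> a 1 i = 0 \<and> a 2 i = 0)))"
  then show "lin_dep_family {1..r+2} (S1 r a)"
  proof (elim disjE)
    assume "\<exists>i\<in>{1..r+2}. \<exists>j\<in>{1..r+2}. i \<noteq> j \<and> lin_dep_family {i, j} (S1 r a)"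
    then obtain i j where ij: "i\<in>{1..r+2}" "j\<in>{1..r+2}" "lin_dep_family {i, j} (S1 r a)" by blast
    have sub: "{i, j} \<subseteq> {1..r+2}" using ij(1,2) by blast
    have fin: "finite {1..r+2}" by simp
    show ?thesis by (rule sub_dep[OF sub fin ij(3)])
  next
    assume "\<exists>M\<in>{1..r}. \<exists>N\<in>{1..r}. M \<noteq> N \<and>
               (\<forall>i\<in>{1..r}. i \<notin> {M, N} \<longrightarrow> a 1 i = 0 \<and> a 2 i = 0)"
    then obtain M N where MN: "M \<in> {1..r}" "N \<in> {1..r}" "M \<noteq> N"
      "\<forall>i\<in>{1..r}. i \<notin> {M, N} \<longrightarrow> ?A i = 0 \<and> ?B i = 0" by blast
    define p where "p = ?A M"
    define q where "q = ?A N"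
    define s where "s = ?B M"
    define t where "t = ?B N"
    have f1: "linform r ?A z = p * z M + q * z N" for z
      unfolding p_def q_def using MN by (intro linform_two) auto
    have f2: "linform r ?B z = s * z M + t * z N" for z
      unfolding s_def t_def using MN by (intro linform_two) auto
    obtain cM cN d1 d2 where nz: "d1 \<noteq> 0 \<or> d2 \<noteq> 0"
      and iden: "\<And>z::nat\<Rightarrow>complex. cM * (z M)^2 + cN * (z N)^2 + d1 * (p * z M + q * z N)^2
                      + d2 * (s * z M + t * z N)^2 = 0"
    proof (cases "p * q = 0")
      case True
      show ?thesis
      proof (rule that[of 1 0 "-(p^2)" "-(q^2)"])
        fix z :: "nat \<Rightarrow> complex"
        have "- (p^2) * (z M)^2 + - (q^2) * (z N)^2 + 1 * (p * z M + q * z N)^2 + 0 * (s * z M + t * z N)^2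
              = 2 * (p * q) * z M * z N"
          by (simp add: algebra_simps power2_eq_square)
        then show "- (p^2) * (z M)^2 + - (q^2) * (z N)^2 + 1 * (p * z M + q * z N)^2 + 0 * (s * z M + t * z N)^2 = 0"
          using True by simp
      qed simp
    next
      case False
      show ?thesis
      proof (rule that[of "s*t" "-(p*q)" "-(s*t*p^2 - p*q*s^2)" "-(s*t*q^2 - p*q*t^2)"])
        fix z :: "nat \<Rightarrow> complex"
        show "-(s*t*p^2 - p*q*s^2) * (z M)^2 + -(s*t*q^2 - p*q*t^2) * (z N)^2 + s*t * (p * z M + q * z N)^2
                      + -(p*q) * (s * z M + t * z N)^2 = 0"
          by (simp add: algebra_simps power2_eq_square)
      qed (use False in simp)
    qed
    define c where "c k = (if k = M then cM else if k = N then cN else if k = r+1 then d1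
                          else if k = r+2 then d2 else 0)" for k
    have "(\<Sum>k\<in>{1..r+2}. c k * S1 r a k z) = 0" for z
    proof -
      have sm: "(\<Sum>k\<in>{1..r}. c k * (z k)^2) = c M * (z M)^2 + c N * (z N)^2"
        by (rule sum_two[OF MN(1-3)]) (auto simp: c_def)
      have cc: "c M = cM" "c N = cN" "c (r+1) = d1" "c (r+2) = d2"
        using MN by (auto simp: c_def)
      have "(\<Sum>k\<in>{1..r+2}. c k * S1 r a k z) = (\<Sum>k\<in>{1..r}. c k * (z k)^2)
           + c (r+1) * (linform r ?A z)^2 + c (r+2) * (linform r ?B z)^2" by (rule sum_S1)
      also have "\<dots> = cM * (z M)^2 + cN * (z N)^2 + d1 * (p * z M + q * z N)^2
                      + d2 * (s * z M + t * z N)^2" by (simp only: sm cc f1 f2)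
      also have "\<dots> = 0" by (rule iden)
      finally show ?thesis .
    qed
    moreover have "\<exists>k\<in>{1..r+2}. c k \<noteq> 0"
    proof -
      have e: "c (r+1) = d1" "c (r+2) = d2" using MN by (auto simp: c_def)
      show ?thesis
      proof (cases "d1 = 0")
        case True
        then have "c (r+2) \<noteq> 0" using nz e by simp
        moreover have "r+2 \<in> {1..r+2}" by simp
        ultimately show ?thesis by (rule bexI)
      next
        case False
        then have "c (r+1) \<noteq> 0" using e by simp
        moreover have "r+1 \<in> {1..r+2}" by simp
        ultimately show ?thesis by (rule bexI)
      qed
    qed
    ultimately show ?thesis unfolding lin_dep_family_def by (intro exI[of _ c] conjI) auto
  qed
qed

end
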